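(* Let $M,K\ge 1$, let ${\bf U}^c\in\mathbb{C}^{M\times M}$ be unitary, and for $k=1,\dots,K$ let $\boldsymbol{\Lambda}_k\in\mathbb{R}^{M\times M}$ be diagonal with strictly positive diagonal entries. Set $\boldsymbol{\Sigma}_k={\bf U}^c\boldsymbol{\Lambda}_k({\bf U}^c)^{\sf H}$. Consider the problem $$\min_{{\bf U}}\; f({\bf U})=\sum_{m=1}^M\sum_{k=1}^K\log\big({\bf u}_m^{\sf H}\boldsymbol{\Sigma}_k{\bf u}_m\big)\quad\text{subject to}\quad {\bf u}_m^{\sf H}{\bf u}_n=\delta_{m,n}\ \ (m,n\in[M]),$$ where ${\bf u}_1,\dots,{\bf u}_M$ are the columns of ${\bf U}$. Then ${\bf U}^c$ is a global minimizer of this problem, i.e. $f({\bf U}^c)\le f({\bf U})$ for every unitary ${\bf U}\in\mathbb{C}^{M\times M}$.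
   Context: $[M]=\{1,\dots,M\}$, $\delta_{m,n}$ is the Kronecker delta, and ${}^{\sf H}$ denotes conjugate transpose. A matrix ${\bf U}$ is unitary if ${\bf U}^{\sf H}{\bf U}={\bf I}_M$. *)

theory Defs
  imports "HOL-Analysis.Analysis"
begin

definition cadj :: "complex^'n^'m \<Rightarrow> complex^'m^'n" where
  "cadj A = (\<chi> i j. cnj (A $ j $ i))"

definition unitary :: "complex^'n^'n \<Rightarrow> bool" where
  "unitary U \<longleftrightarrow> cadj U ** U = mat 1"

definition diagm :: "('n \<Rightarrow> complex) \<Rightarrow> complex^'n^'n" where
  "diagm d = (\<chi> i j. if i = j then d i else 0)"

definition qform :: "complex^'n \<Rightarrow> complex^'n^'n \<Rightarrow> complex" where
  "qform u A = (\<Sum>i\<in>UNIV. cnj (u $ i) * ((A *v u) $ i))"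

end

theory Submission
  imports Defs
begin

lemma jensen_ln:
  fixes P x :: "'a \<Rightarrow> real"
  assumes fin: "finite I" and P0: "\<And>i. i \<in> I \<Longrightarrow> P i \<ge> 0" and P1: "sum P I = 1"
    and xp: "\<And>i. i \<in> I \<Longrightarrow> x i > 0"
  shows "(\<Sum>i\<in>I. P i * ln (x i)) \<le> ln (\<Sum>i\<in>I. P i * x i)"
proof -
  define S where "S = (\<Sum>i\<in>I. P i * x i)"
  obtain j where j: "j \<in> I" "P j > 0"
    using P1 P0 by (metis less_eq_real_def sum_nonpos zero_less_one not_le)
  have "P j * x j \<le> S" unfolding S_def
    apply (rule member_le_sum) using fin j P0 xp by (auto intro: mult_nonneg_nonneg less_imp_le)
  moreover have "P j * x j > 0" using j xp by auto
  ultimately have Sp: "S > 0" by linarith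
  have "(\<Sum>i\<in>I. P i * ln (x i)) - ln S = (\<Sum>i\<in>I. P i * (ln (x i) - ln S))"
    by (simp add: right_diff_distrib sum_subtractf sum_distrib_right[symmetric] P1)
  also have "\<dots> = (\<Sum>i\<in>I. P i * ln (x i / S))"
  proof (rule sum.cong[OF refl])
    fix i assume "i \<in> I"
    then show "P i * (ln (x i) - ln S) = P i * ln (x i / S)" using xp[of i] Sp by (simp add: ln_div)
  qed
  also have "\<dots> \<le> (\<Sum>i\<in>I. P i * (x i / S - 1))"
    using xp Sp P0 by (intro sum_mono mult_left_mono ln_le_minus_one) auto
  also have "\<dots> = S / S - 1"
    by (simp add: right_diff_distrib sum_subtractf P1 sum_divide_distrib[symmetric] S_def[symmetric])
  also have "\<dots> = 0" using Sp by simp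
  finally show ?thesis unfolding S_def by simp
qed

lemma adj_swap:
  fixes B :: "complex^'n^'m"
  shows "(\<Sum>j\<in>UNIV. cnj (u$j) * (B *v w)$j) = (\<Sum>i\<in>UNIV. cnj ((cadj B *v u)$i) * w$i)"
proof -
  have "(\<Sum>j\<in>UNIV. cnj (u$j) * (B *v w)$j) = (\<Sum>j\<in>UNIV. \<Sum>i\<in>UNIV. cnj (u$j) * B$j$i * w$i)"
    by (simp add: matrix_vector_mult_def sum_distrib_left mult_ac)
  also have "\<dots> = (\<Sum>i\<in>UNIV. \<Sum>j\<in>UNIV. cnj (u$j) * B$j$i * w$i)"
    by (rule sum.swap)
  also have "\<dots> = (\<Sum>i\<in>UNIV. cnj ((cadj B *v u)$i) * w$i)"
    by (simp add: matrix_vector_mult_def cadj_def sum_distrib_left sum_distrib_right mult_ac)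
  finally show ?thesis .
qed

lemma qform_Sig:
  fixes Uc :: "complex^'m^'m"
  shows "Re (qform u (Uc ** diagm (\<lambda>i. complex_of_real (l i)) ** cadj Uc))
     = (\<Sum>i\<in>UNIV. l i * (cmod ((cadj Uc *v u)$i))^2)"
proof -
  define v where "v = cadj Uc *v u"
  have "qform u (Uc ** diagm (\<lambda>i. complex_of_real (l i)) ** cadj Uc)
      = (\<Sum>j\<in>UNIV. cnj (u$j) * (Uc *v (diagm (\<lambda>i. complex_of_real (l i)) *v v))$j)"
    unfolding qform_def v_def by (simp add: matrix_vector_mul_assoc matrix_mul_assoc)
  also have "\<dots> = (\<Sum>i\<in>UNIV. cnj (v$i) * (diagm (\<lambda>i. complex_of_real (l i)) *v v)$i)"
    unfolding v_def by (rule adj_swap)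
  also have "\<dots> = (\<Sum>i\<in>UNIV. complex_of_real (l i * (cmod (v$i))^2))"
  proof (intro sum.cong refl)
    fix i
    have "(diagm (\<lambda>i. complex_of_real (l i)) *v v)$i = complex_of_real (l i) * v$i"
      by (simp add: diagm_def matrix_vector_mult_def if_distrib[where f="\<lambda>a. a * _"] cong: if_cong)
    then show "cnj (v$i) * (diagm (\<lambda>i. complex_of_real (l i)) *v v)$i = complex_of_real (l i * (cmod (v$i))^2)"
      using complex_norm_square[of "v$i"] by (simp add: mult_ac)
  qed
  finally show ?thesis unfolding v_def by simp
qed

lemma cadj_mult: "cadj ((A::complex^'n^'m) ** (B::complex^'k^'n)) = cadj B ** cadj A"
  by (simp add: cadj_def matrix_matrix_mult_def vec_eq_iff mult.commute)

lemma cadj_cadj: "cadj (cadj A) = A"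
  by (simp add: cadj_def vec_eq_iff)

lemma unitary_both:
  fixes V :: "complex^'n^'n"
  assumes "unitary V"
  shows "cadj V ** V = mat 1" "V ** cadj V = mat 1"
  using assms matrix_left_right_inverse unfolding unitary_def by blast+

lemma unitary_col:
  fixes V :: "complex^'n^'n"
  assumes "unitary V"
  shows "(\<Sum>i\<in>UNIV. (cmod (V$i$m))^2) = 1"
proof -
  have "(cadj V ** V)$m$m = 1" using unitary_both[OF assms] by (simp add: mat_def)
  hence "(\<Sum>i\<in>UNIV. V$i$m * cnj (V$i$m)) = 1"
    by (simp add: matrix_matrix_mult_def cadj_def mult.commute)
  moreover have "complex_of_real (\<Sum>i\<in>UNIV. (cmod (V$i$m))^2) = (\<Sum>i\<in>UNIV. V$i$m * cnj (V$i$m))"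
    by (simp only: of_real_sum complex_norm_square)
  ultimately have "complex_of_real (\<Sum>i\<in>UNIV. (cmod (V$i$m))^2) = 1" by simp
  thus ?thesis by (metis of_real_1 of_real_eq_iff)
qed

lemma unitary_row:
  fixes V :: "complex^'n^'n"
  assumes "unitary V"
  shows "(\<Sum>m\<in>UNIV. (cmod (V$i$m))^2) = 1"
proof -
  have "(V ** cadj V)$i$i = 1" using unitary_both[OF assms] by (simp add: mat_def)
  hence "(\<Sum>m\<in>UNIV. V$i$m * cnj (V$i$m)) = 1"
    by (simp add: matrix_matrix_mult_def cadj_def)
  moreover have "complex_of_real (\<Sum>m\<in>UNIV. (cmod (V$i$m))^2) = (\<Sum>m\<in>UNIV. V$i$m * cnj (V$i$m))"
    by (simp only: of_real_sum complex_norm_square)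
  ultimately have "complex_of_real (\<Sum>m\<in>UNIV. (cmod (V$i$m))^2) = 1" by simp
  thus ?thesis by (metis of_real_1 of_real_eq_iff)
qed

lemma col_mult: "cadj A *v column m U = column m (cadj A ** U)"
  by (simp add: column_def matrix_vector_mult_def matrix_matrix_mult_def vec_eq_iff)

theorem theorem1:
  fixes Uc :: "complex^'m^'m" and K :: nat and lam :: "nat \<Rightarrow> 'm \<Rightarrow> real"
  assumes "K \<ge> 1"
    and "unitary Uc"
    and "\<And>k i. k \<in> {1..K} \<Longrightarrow> lam k i > 0"
  defines "Sig \<equiv> (\<lambda>k. Uc ** diagm (\<lambda>i. complex_of_real (lam k i)) ** cadj Uc)"
  defines "f \<equiv> (\<lambda>U::complex^'m^'m. \<Sum>m\<in>UNIV. \<Sum>k=1..K. ln (Re (qform (column m U) (Sig k))))"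
  shows "\<forall>U::complex^'m^'m. unitary U \<longrightarrow> f Uc \<le> f U"
proof (intro allI impI)
  fix U :: "complex^'m^'m"
  assume uU: "unitary U"
  have gen: "\<And>W. f W = (\<Sum>m\<in>UNIV. \<Sum>k=1..K. ln (\<Sum>i\<in>UNIV. lam k i * (cmod ((cadj Uc ** W)$i$m))^2))"
    unfolding f_def Sig_def qform_Sig col_mult by (simp add: column_def)
  have I: "cadj Uc ** Uc = mat 1" using unitary_both[OF assms(2)] by simp
  have fUc: "f Uc = (\<Sum>m\<in>UNIV. \<Sum>k=1..K. ln (lam k m))"
  proof -
    have "\<And>k m i. lam k i * (cmod ((mat 1 :: complex^'m^'m) $ i $ m))^2 = (if i = m then lam k m else 0)"
      by (simp add: mat_def)
    then show ?thesis unfolding gen I by simp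
  qed
  define V where "V = cadj Uc ** U"
  have uV: "unitary V" unfolding unitary_def V_def cadj_mult cadj_cadj
    using unitary_both[OF assms(2)] unitary_both[OF uU]
    by (metis matrix_mul_assoc matrix_mul_lid)
  have "f Uc = (\<Sum>k=1..K. \<Sum>i\<in>UNIV. ln (lam k i))"
    unfolding fUc by (rule sum.swap)
  also have "\<dots> = (\<Sum>k=1..K. \<Sum>i\<in>UNIV. \<Sum>m\<in>UNIV. (cmod (V$i$m))^2 * ln (lam k i))"
    by (simp add: sum_distrib_right[symmetric] unitary_row[OF uV])
  also have "\<dots> = (\<Sum>k=1..K. \<Sum>m\<in>UNIV. \<Sum>i\<in>UNIV. (cmod (V$i$m))^2 * ln (lam k i))"
    by (rule sum.cong[OF refl], rule sum.swap)
  also have "\<dots> = (\<Sum>m\<in>UNIV. \<Sum>k=1..K. \<Sum>i\<in>UNIV. (cmod (V$i$m))^2 * ln (lam k i))"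
    by (rule sum.swap)
  also have "\<dots> \<le> (\<Sum>m\<in>UNIV. \<Sum>k=1..K. ln (\<Sum>i\<in>UNIV. (cmod (V$i$m))^2 * lam k i))"
    using assms(3) unitary_col[OF uV]
    by (intro sum_mono jensen_ln) auto
  also have "\<dots> = f U" unfolding gen V_def by (simp add: mult.commute)
  finally show "f Uc \<le> f U" .
qed

end
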